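(* Let $\mathbb{M}$ be $\mathbb{T}^{n}$ or $\mathbb{S}^{n}$ and let $X$ be a polynomic vector field on $\mathbb{M}$. Then there exist a smooth embedding $\Psi: \mathbb{M} \rightarrow \mathbb{R}^{d}$, with $d$ depending only on $n$ and on the degree of $X$, and a homogeneous quadratic ODE on $\mathbb{R}^{d}$ \[ \frac{d y_i}{dt}=\sum_{j,k=1}^d B_{ijk} y_j y_k, \quad i=1,\dots,d, \] with real coefficients satisfying $B_{ijk}=-B_{kji}$ for all $i,j,k$, such that for every $x \in \mathbb{M}$, $y(t)=\Psi(\phi^{t}_{X}(x))$ is the solution of this ODE with initial condition $y(0)=\Psi(x)$ (here $\phi^t_X$ is the flow of $X$). Moreover, if $X$ is divergence-free on $\mathbb{M}$ (with respect to the round metric on $\mathbb{S}^n$, or the flat metric on $\mathbb{T}^{n}$), then the quadratic vector field $V(y)=\sum_{i,j,k} B_{ijk} y_j y_k \frac{\partial}{\partial y_i}$ is divergence-free on $\mathbb{R}^d$ with respect to the standard Euclidean metric.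
   Context: $\mathbb{T}^n=(\mathbb{R}/\mathbb{Z})^n$ and $\mathbb{S}^n\subset\mathbb{R}^{n+1}$ is the unit sphere. A vector field on $\mathbb{T}^n$ is called polynomic if it is a finite sum $\sum_k a_k\sin(2\pi k\cdot x)+b_k\cos(2\pi k\cdot x)$ with $k\in\mathbb{Z}^n$, $a_k,b_k\in\mathbb{R}^n$; its degree is the squared modulus $|k|^2$ of the highest frequency occurring. A vector field on $\mathbb{S}^n$ is called polynomic if it is the restriction of a polynomial vector field on $\mathbb{R}^{n+1}$ tangent to $\mathbb{S}^n$; its degree is the degree of that polynomial. *)

theory Defs
  imports "HOL-Analysis.Analysis"
begin

fun Ck :: "nat \<Rightarrow> ('a::euclidean_space \<Rightarrow> real) \<Rightarrow> bool" where
  "Ck 0 f = continuous_on UNIV f"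
| "Ck (Suc k) f = (f differentiable_on UNIV \<and>
                     (\<forall>v. Ck k (\<lambda>x. frechet_derivative f (at x) v)))"

definition smooth :: "('a::euclidean_space \<Rightarrow> real) \<Rightarrow> bool" where
  "smooth f \<longleftrightarrow> (\<forall>k. Ck k f)"

section \<open>Torus T^n = R^n / Z^n (vector fields = Z^n-periodic maps on R^n)\<close>

definition freq_dot :: "int ^ 'n \<Rightarrow> real ^ 'n \<Rightarrow> real" where
  "freq_dot k x = (\<Sum>i\<in>UNIV. of_int (k $ i) * x $ i)"

definition sqmod :: "int ^ 'n \<Rightarrow> int" where
  "sqmod k = (\<Sum>i\<in>UNIV. (k $ i)^2)"

definition torus_polynomic_le :: "nat \<Rightarrow> (real ^ 'n \<Rightarrow> real ^ 'n) \<Rightarrow> bool" where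
  "torus_polynomic_le m X \<longleftrightarrow>
     (\<exists>a b :: int ^ 'n \<Rightarrow> real ^ 'n.
        X = (\<lambda>x. \<Sum>k\<in>{k. sqmod k \<le> int m}.
                  sin (2 * pi * freq_dot k x) *\<^sub>R a k + cos (2 * pi * freq_dot k x) *\<^sub>R b k))"

definition torus_polynomic_deg :: "nat \<Rightarrow> (real ^ 'n \<Rightarrow> real ^ 'n) \<Rightarrow> bool" where
  "torus_polynomic_deg m X \<longleftrightarrow> torus_polynomic_le m X \<and> (\<forall>m'<m. \<not> torus_polynomic_le m' X)"

definition torus_divergence :: "(real ^ 'n \<Rightarrow> real ^ 'n) \<Rightarrow> real ^ 'n \<Rightarrow> real" where
  "torus_divergence X x = (\<Sum>i\<in>UNIV. deriv (\<lambda>s. X (x + s *\<^sub>R axis i 1) $ i) 0)"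

definition torus_smooth_embedding :: "nat \<Rightarrow> (nat \<Rightarrow> real ^ 'n \<Rightarrow> real) \<Rightarrow> bool" where
  "torus_smooth_embedding d \<Psi> \<longleftrightarrow>
     (\<forall>i<d. smooth (\<Psi> i)) \<and>
     (\<forall>i<d. \<forall>x k. \<Psi> i (x + (\<chi> j. of_int (k $ j))) = \<Psi> i x) \<and>
     (\<forall>x y. (\<forall>i<d. \<Psi> i x = \<Psi> i y) \<longrightarrow> (\<forall>j. x $ j - y $ j \<in> \<int>)) \<and>
     (\<forall>x v. v \<noteq> 0 \<longrightarrow> (\<exists>i<d. deriv (\<lambda>s. \<Psi> i (x + s *\<^sub>R v)) 0 \<noteq> 0))"

section \<open>Sphere S^n \<subseteq> R^(n+1)\<close>

definition monomial :: "('n \<Rightarrow> nat) \<Rightarrow> real ^ 'n \<Rightarrow> real" where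
  "monomial \<alpha> x = (\<Prod>i\<in>UNIV. (x $ i) ^ (\<alpha> i))"

definition poly_fun_le :: "nat \<Rightarrow> (real ^ 'n \<Rightarrow> real) \<Rightarrow> bool" where
  "poly_fun_le m f \<longleftrightarrow>
     (\<exists>c :: ('n \<Rightarrow> nat) \<Rightarrow> real.
        f = (\<lambda>x. \<Sum>\<alpha>\<in>{\<alpha>. (\<Sum>i\<in>UNIV. \<alpha> i) \<le> m}. c \<alpha> * monomial \<alpha> x))"

definition sphere_polynomic_le :: "nat \<Rightarrow> (real ^ 'n \<Rightarrow> real ^ 'n) \<Rightarrow> bool" where
  "sphere_polynomic_le m X \<longleftrightarrow>
     (\<exists>P :: real ^ 'n \<Rightarrow> real ^ 'n.
        (\<forall>i. poly_fun_le m (\<lambda>x. P x $ i)) \<and>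
        (\<forall>x\<in>sphere 0 1. P x \<bullet> x = 0) \<and>
        (\<forall>x\<in>sphere 0 1. X x = P x))"

definition sphere_polynomic_deg :: "nat \<Rightarrow> (real ^ 'n \<Rightarrow> real ^ 'n) \<Rightarrow> bool" where
  "sphere_polynomic_deg m X \<longleftrightarrow> sphere_polynomic_le m X \<and> (\<forall>m'<m. \<not> sphere_polynomic_le m' X)"

definition tproj :: "real ^ 'n \<Rightarrow> real ^ 'n \<Rightarrow> real ^ 'n" where
  "tproj x v = v - (v \<bullet> x) *\<^sub>R x"

text \<open>Riemannian divergence on the round sphere at x: the trace over the tangent space of the
  covariant derivative of X, computed as  sum_i < d/ds X(c_i(s)) |_{s=0}, p_i >  where p_i is the
  orthogonal projection of the i-th standard basis vector onto T_x S^n and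
  c_i(s) = (x + s p_i)/|x + s p_i| is a curve on S^n with c_i(0) = x, c_i'(0) = p_i.
  (Only values of X on S^n are used.)\<close>
definition sphere_divergence :: "(real ^ 'n \<Rightarrow> real ^ 'n) \<Rightarrow> real ^ 'n \<Rightarrow> real" where
  "sphere_divergence X x =
     (\<Sum>i\<in>UNIV. deriv (\<lambda>s. X ((x + s *\<^sub>R tproj x (axis i 1)) /\<^sub>R norm (x + s *\<^sub>R tproj x (axis i 1)))
                           \<bullet> tproj x (axis i 1)) 0)"

text \<open>Smooth embedding of S^n into R^d: d smooth functions on R^(n+1) (every smooth function on
  S^n extends to one), injective on S^n, with differential injective on each tangent space.\<close>
definition sphere_smooth_embedding :: "nat \<Rightarrow> (nat \<Rightarrow> real ^ 'n \<Rightarrow> real) \<Rightarrow> bool" where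
  "sphere_smooth_embedding d \<Psi> \<longleftrightarrow>
     (\<forall>i<d. smooth (\<Psi> i)) \<and>
     (\<forall>x\<in>sphere 0 1. \<forall>y\<in>sphere 0 1. (\<forall>i<d. \<Psi> i x = \<Psi> i y) \<longrightarrow> x = y) \<and>
     (\<forall>x\<in>sphere 0 1. \<forall>v. v \<noteq> 0 \<and> v \<bullet> x = 0 \<longrightarrow>
         (\<exists>i<d. deriv (\<lambda>s. \<Psi> i (x + s *\<^sub>R v)) 0 \<noteq> 0))"

definition quad_field :: "nat \<Rightarrow> (nat \<Rightarrow> nat \<Rightarrow> nat \<Rightarrow> real) \<Rightarrow> (nat \<Rightarrow> real) \<Rightarrow> nat \<Rightarrow> real" where
  "quad_field d B y i = (\<Sum>j<d. \<Sum>k<d. B i j k * y j * y k)"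

definition quad_div_free :: "nat \<Rightarrow> (nat \<Rightarrow> nat \<Rightarrow> nat \<Rightarrow> real) \<Rightarrow> bool" where
  "quad_div_free d B \<longleftrightarrow>
     (\<forall>y :: nat \<Rightarrow> real. (\<Sum>i<d. deriv (\<lambda>s. quad_field d B (y(i := s)) i) (y i)) = 0)"

end

theory Submission
  imports Defs
begin


lemma smooth_class:
  fixes F :: "('a::euclidean_space \<Rightarrow> real) set"
  assumes cl: "\<And>g. g \<in> F \<Longrightarrow> \<exists>g'. (\<forall>x. (g has_derivative g' x) (at x)) \<and> (\<forall>v. (\<lambda>x. g' x v) \<in> F)"
  shows "g \<in> F \<Longrightarrow> Ck k g"
proof (induction k arbitrary: g)
  case 0
  then obtain g' where "\<forall>x. (g has_derivative g' x) (at x)" using cl by blast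
  then have "\<forall>x\<in>UNIV. isCont g x" using has_derivative_continuous by blast
  then show ?case
    by (simp add: continuous_at_imp_continuous_on)
next
  case (Suc k)
  then obtain g' where d: "\<forall>x. (g has_derivative g' x) (at x)" and c: "\<forall>v. (\<lambda>x. g' x v) \<in> F"
    using cl by blast
  have fd: "\<And>x. frechet_derivative g (at x) = g' x" using d frechet_derivative_at by metis
  have "g differentiable_on UNIV" using d unfolding differentiable_on_def differentiable_def by blast
  moreover have "Ck k (\<lambda>x. frechet_derivative g (at x) v)" for v
    using Suc.IH[OF c[rule_format, of v]] by (simp add: fd)
  ultimately show ?case by simp
qed

lemma smooth_classI:
  fixes F :: "('a::euclidean_space \<Rightarrow> real) set"
  assumes cl: "\<And>g. g \<in> F \<Longrightarrow> \<exists>g'. (\<forall>x. (g has_derivative g' x) (at x)) \<and> (\<forall>v. (\<lambda>x. g' x v) \<in> F)"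
  and "g \<in> F" shows "smooth g"
  using smooth_class[OF cl] assms(2) unfolding smooth_def by blast

lemma embed:
  fixes I :: "'i set" and f :: "'i \<Rightarrow> 'a \<Rightarrow> real" and W :: "'i \<Rightarrow> 'i \<Rightarrow> 'i \<Rightarrow> real"
  assumes fin: "finite I" and skew: "\<And>a b c. a\<in>I \<Longrightarrow> b\<in>I \<Longrightarrow> c\<in>I \<Longrightarrow> W a b c = - W c b a"
  defines "n \<equiv> card (I \<times> (UNIV::bool set))"
  shows "\<exists>\<Psi> B. (\<forall>i<n. \<exists>a\<in>I. \<Psi> i = f a \<and> (\<forall>x. quad_field n B (\<lambda>j. \<Psi> j x) i = (\<Sum>b\<in>I. \<Sum>c\<in>I. W a b c * f b x * f c x)))
     \<and> (\<forall>a\<in>I. \<exists>i<n. \<Psi> i = f a)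
     \<and> (\<forall>i<n. \<forall>j<n. \<forall>k<n. B i j k = - B k j i) \<and> quad_div_free n B"
proof -
  define J where "J = I \<times> (UNIV::bool set)"
  have finJ: "finite J" using fin by (simp add: J_def)
  obtain h where h: "bij_betw h {0..<n} J" using ex_bij_betw_nat_finite[OF finJ] n_def J_def by blast
  have hJ: "h i \<in> J" if "i < n" for i using h that by (auto simp: bij_betw_def)
  define f2 where "f2 = (\<lambda>p::'i\<times>bool. f (fst p))"
  define W2 where "W2 = (\<lambda>(p::'i\<times>bool) (q::'i\<times>bool) (r::'i\<times>bool).
      if snd q \<noteq> snd p \<and> snd r = snd p then W (fst p) (fst q) (fst r) else 0)"
  define \<Psi> where "\<Psi> = (\<lambda>i. f2 (h i))"
  define B where "B = (\<lambda>i j k. W2 (h i) (h j) (h k))"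
  have W2skew: "W2 p q r = - W2 r q p" if "p \<in> J" "q \<in> J" "r \<in> J" for p q r
  proof -
    have "fst p \<in> I" "fst q \<in> I" "fst r \<in> I" using that by (auto simp: J_def)
    then show ?thesis using skew[of "fst p" "fst q" "fst r"] unfolding W2_def by auto
  qed
  have W2diag: "W2 p p r = 0" for p r by (simp add: W2_def)
  have W2diag2: "W2 p q p = 0" if "p \<in> J" "q \<in> J" for p q
    using W2skew[OF that(1,2,1)] by simp
  have sum2: "(\<Sum>q\<in>J. \<Sum>r\<in>J. W2 p q r * f2 q x * f2 r x) = (\<Sum>b\<in>I. \<Sum>c\<in>I. W (fst p) b c * f b x * f c x)"
    if "p \<in> J" for p x
  proof -
    obtain a s where p: "p = (a,s)" by (cases p)
    have sJ: "(\<Sum>q\<in>J. g q) = (\<Sum>b\<in>I. g (b,True) + g (b,False))" for g :: "'i\<times>bool \<Rightarrow> real"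
      using sum.cartesian_product[where g="\<lambda>b t. g (b,t)" and A=I and B=UNIV] by (simp add: J_def UNIV_bool add.commute)
    have "(\<Sum>q\<in>J. \<Sum>r\<in>J. W2 p q r * f2 q x * f2 r x)
        = (\<Sum>b\<in>I. (\<Sum>c\<in>I. W2 p (b,True) (c,True) * f2 (b,True) x * f2 (c,True) x + W2 p (b,True) (c,False) * f2 (b,True) x * f2 (c,False) x)
           + (\<Sum>c\<in>I. W2 p (b,False) (c,True) * f2 (b,False) x * f2 (c,True) x + W2 p (b,False) (c,False) * f2 (b,False) x * f2 (c,False) x))"
      unfolding sJ by simp
    also have "\<dots> = (\<Sum>b\<in>I. \<Sum>c\<in>I. W a b c * f b x * f c x)"
      by (cases s) (simp_all add: W2_def f2_def p)
    finally show ?thesis by (simp add: p)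
  qed
  have qf: "quad_field n B (\<lambda>j. \<Psi> j x) i = (\<Sum>b\<in>I. \<Sum>c\<in>I. W (fst (h i)) b c * f b x * f c x)"
    if "i < n" for i x
  proof -
    have "quad_field n B (\<lambda>j. \<Psi> j x) i = (\<Sum>j\<in>{0..<n}. \<Sum>k\<in>{0..<n}. W2 (h i) (h j) (h k) * f2 (h j) x * f2 (h k) x)"
      by (simp add: quad_field_def B_def \<Psi>_def atLeast0LessThan)
    also have "\<dots> = (\<Sum>q\<in>J. \<Sum>r\<in>J. W2 (h i) q r * f2 q x * f2 r x)"
    proof -
      define G where "G = (\<lambda>q r. W2 (h i) q r * f2 q x * f2 r x)"
      have e1: "(\<Sum>k\<in>{0..<n}. G q (h k)) = sum (G q) J" for q
        by (rule sum.reindex_bij_betw[OF h])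
      have e2: "(\<Sum>j\<in>{0..<n}. sum (G (h j)) J) = (\<Sum>q\<in>J. sum (G q) J)"
        by (rule sum.reindex_bij_betw[OF h])
      show ?thesis using e1 e2 unfolding G_def by presburger
    qed
    also have "\<dots> = (\<Sum>b\<in>I. \<Sum>c\<in>I. W (fst (h i)) b c * f b x * f c x)" by (rule sum2[OF hJ[OF that]])
    finally show ?thesis .
  qed
  have P1: "\<forall>i<n. \<exists>a\<in>I. \<Psi> i = f a \<and> (\<forall>x. quad_field n B (\<lambda>j. \<Psi> j x) i = (\<Sum>b\<in>I. \<Sum>c\<in>I. W a b c * f b x * f c x))"
  proof (intro allI impI)
    fix i assume "i < n"
    then show "\<exists>a\<in>I. \<Psi> i = f a \<and> (\<forall>x. quad_field n B (\<lambda>j. \<Psi> j x) i = (\<Sum>b\<in>I. \<Sum>c\<in>I. W a b c * f b x * f c x))"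
      using qf hJ[OF \<open>i<n\<close>] by (intro bexI[of _ "fst (h i)"]) (auto simp: \<Psi>_def f2_def J_def)
  qed
  have P2: "\<forall>a\<in>I. \<exists>i<n. \<Psi> i = f a"
  proof
    fix a assume "a \<in> I"
    then have "(a,True) \<in> J" by (simp add: J_def)
    then obtain i where "i \<in> {0..<n}" "h i = (a,True)" using h by (metis bij_betw_iff_bijections)
    then show "\<exists>i<n. \<Psi> i = f a" by (auto simp: \<Psi>_def f2_def)
  qed
  have P3: "\<forall>i<n. \<forall>j<n. \<forall>k<n. B i j k = - B k j i"
    unfolding B_def using W2skew hJ by blast
  have P4: "quad_div_free n B"
    unfolding quad_div_free_def
  proof (intro allI sum.neutral ballI)
    fix y :: "nat \<Rightarrow> real" and i assume "i \<in> {..<n}"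
    then have i: "i < n" by simp
    have "(\<lambda>s. quad_field n B (y(i := s)) i) = (\<lambda>s. quad_field n B y i)"
    proof
      fix s
      show "quad_field n B (y(i := s)) i = quad_field n B y i"
        unfolding quad_field_def
      proof (intro sum.cong refl)
        fix j k assume "j \<in> {..<n}" "k \<in> {..<n}"
        then show "B i j k * (y(i := s)) j * (y(i := s)) k = B i j k * y j * y k"
        proof -
          have j: "j < n" "k < n" using \<open>j \<in> {..<n}\<close> \<open>k \<in> {..<n}\<close> by auto
          show ?thesis
          proof (cases "j = i \<or> k = i")
            case True
            then have "B i j k = 0" using W2diag W2diag2[OF hJ[OF i] hJ[OF j(1)]] unfolding B_def by blast
            then show ?thesis by simp
          next
            case False
            then show ?thesis by simp
          qed
        qed
      qed
    qed
    then show "deriv (\<lambda>s. quad_field n B (y(i := s)) i) (y i) = 0" by simp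
  qed
  show ?thesis using P1 P2 P3 P4 by blast
qed



definition TK :: "nat \<Rightarrow> (int^'n) set" where "TK M = {k. sqmod k \<le> int M}"

lemma finite_TK: "finite (TK M :: (int^'n) set)"
proof -
  have "TK M \<subseteq> vec_lambda ` (PiE (UNIV::'n set) (\<lambda>_. {-int M..int M}))"
  proof
    fix k :: "int^'n" assume k: "k \<in> TK M"
    have ab: "\<bar>k $ i\<bar> \<le> int M" for i
    proof -
      have "(k $ i)^2 \<le> sqmod k" unfolding sqmod_def
        by (rule member_le_sum) auto
      moreover have "\<bar>k $ i\<bar> \<le> (k $ i)^2"
      proof (cases "k $ i = 0")
        case False
        then have "1 \<le> \<bar>k $ i\<bar>" by simp
        then have "\<bar>k $ i\<bar> \<le> \<bar>k $ i\<bar> ^ 2" by (rule self_le_power) simp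
        then show ?thesis by simp
      qed simp
      ultimately show ?thesis using k by (auto simp: TK_def)
    qed
    have "k $ i \<in> {-int M..int M}" for i using ab[of i] by (simp add: abs_le_iff)
    then have "vec_nth k \<in> PiE (UNIV::'n set) (\<lambda>_. {-int M..int M})" by auto
    then show "k \<in> vec_lambda ` (PiE (UNIV::'n set) (\<lambda>_. {-int M..int M}))"
      using image_eqI[of k vec_lambda "vec_nth k"] by simp
  qed
  moreover have "finite (PiE (UNIV::'n set) (\<lambda>_. {-int M..int M}))"
    by (intro finite_PiE) auto
  ultimately show ?thesis by (meson finite_imageI finite_subset)
qed

lemma fd_inner: "freq_dot k x = (\<chi> i. real_of_int (k $ i)) \<bullet> x"
  by (simp add: freq_dot_def inner_vec_def)

lemma fd_add: "freq_dot k (x + y) = freq_dot k x + freq_dot k y"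
  by (simp add: fd_inner inner_add_right)

lemma fd_axis: "freq_dot (axis j 1) x = x $ j"
  by (simp add: freq_dot_def axis_def if_distrib[of real_of_int] if_distrib[of "\<lambda>z. z * _"] cong: if_cong)

lemma sqmod_axis: "sqmod (axis j (1::int)) = 1"
  by (simp add: sqmod_def axis_def if_distrib[of "\<lambda>z. z^2"] cong: if_cong)

lemma fd_int: "freq_dot l (\<chi> j. real_of_int (kk $ j)) = real_of_int (\<Sum>i\<in>UNIV. l $ i * kk $ i)"
  by (simp add: freq_dot_def)

definition ft :: "((int^'n) \<times> bool) \<Rightarrow> real^'n \<Rightarrow> real" where
  "ft q x = (if snd q then sin (2*pi*freq_dot (fst q) x) else cos (2*pi*freq_dot (fst q) x))"

lemma ft_smooth: fixes q :: "(int^'n) \<times> bool" shows "smooth (ft q)"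
proof -
  define FT where "FT = {g :: real^'n \<Rightarrow> real. \<exists>c k \<phi>. g = (\<lambda>x. c * sin (2*pi*freq_dot k x + \<phi>))}"
  have cl: "\<exists>g'. (\<forall>x. (g has_derivative g' x) (at x)) \<and> (\<forall>v. (\<lambda>x. g' x v) \<in> FT)" if "g \<in> FT" for g
  proof -
    obtain c k \<phi> where g: "g = (\<lambda>x. c * sin (2*pi*freq_dot k x + \<phi>))" using \<open>g \<in> FT\<close> FT_def by blast
    define \<kappa> where "\<kappa> = (\<chi> i. real_of_int (k $ i))"
    have D1: "(g has_derivative (\<lambda>v. c * ((2*pi*(\<kappa> \<bullet> v)) * cos (2*pi*freq_dot k x + \<phi>)))) (at x)" for x
    proof -
      have bl: "bounded_linear (\<lambda>v. 2*pi*(\<kappa> \<bullet> v))"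
        by (rule bounded_linear_compose[OF bounded_linear_mult_right bounded_linear_inner_right])
      have d1: "((\<lambda>x. 2*pi*(\<kappa> \<bullet> x) + \<phi>) has_derivative (\<lambda>v. 2*pi*(\<kappa> \<bullet> v))) (at x)"
        by (rule has_derivative_add_const[OF bounded_linear_imp_has_derivative[OF bl]])
      note d2 = DERIV_compose_FDERIV[OF DERIV_sin[of "2*pi*(\<kappa> \<bullet> x) + \<phi>"] d1]
      show ?thesis unfolding g fd_inner \<kappa>_def[symmetric]
        using has_derivative_mult_right[OF d2, of c] by simp
    qed
    have D2: "(\<lambda>x. c * ((2*pi*(\<kappa> \<bullet> v)) * cos (2*pi*freq_dot k x + \<phi>))) \<in> FT" for v
      unfolding FT_def mem_Collect_eq
    proof (rule exI[of _ "c * (2*pi*(\<kappa> \<bullet> v))"], rule exI[of _ k], rule exI[of _ "\<phi> + pi/2"])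
      have sc: "\<And>y. sin (y + pi/2) = cos y" by (simp add: sin_add)
      show "(\<lambda>x. c * ((2*pi*(\<kappa> \<bullet> v)) * cos (2*pi*freq_dot k x + \<phi>))) =
            (\<lambda>x. c * (2*pi*(\<kappa> \<bullet> v)) * sin (2*pi*freq_dot k x + (\<phi> + pi/2)))"
        by (simp only: add.assoc[symmetric] sc mult.assoc)
    qed
    show ?thesis
      apply (rule exI[of _ "\<lambda>x v. c * ((2*pi*(\<kappa> \<bullet> v)) * cos (2*pi*freq_dot k x + \<phi>))"])
      using D1 D2 by auto
  qed
  have "ft q \<in> FT"
    unfolding FT_def mem_Collect_eq
    by (rule exI[of _ 1], rule exI[of _ "fst q"], rule exI[of _ "if snd q then 0 else pi/2"])
       (auto simp: ft_def sin_add)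
  then show ?thesis using smooth_classI[of FT "ft q"] cl by blast
qed

lemma sin_per: "sin (y + 2*pi*real_of_int N) = sin y" by (simp add: sin_add)
lemma cos_per: "cos (y + 2*pi*real_of_int N) = cos y" by (simp add: cos_add)

lemma ft_periodic: "ft q (x + (\<chi> j. real_of_int (kk $ j))) = ft q x"
  by (simp only: ft_def fd_add fd_int distrib_left sin_per cos_per)

lemma ft_deriv:
  fixes \<gamma> :: "real \<Rightarrow> real^'n" and q :: "(int^'n) \<times> bool"
  assumes "(\<gamma> has_vector_derivative V) (at t)"
  shows "((\<lambda>s. ft q (\<gamma> s)) has_real_derivative
     (if snd q then 2*pi else -2*pi) * freq_dot (fst q) V * ft (fst q, \<not> snd q) (\<gamma> t)) (at t)"
proof -
  define \<kappa> where "\<kappa> = (\<chi> i. real_of_int (fst q $ i))"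
  have "((\<lambda>s. \<kappa> \<bullet> \<gamma> s) has_vector_derivative \<kappa> \<bullet> V) (at t)"
    by (rule bounded_linear.has_vector_derivative[OF bounded_linear_inner_right assms])
  then have h: "((\<lambda>s. 2*pi*(\<kappa> \<bullet> \<gamma> s)) has_real_derivative 2*pi*(\<kappa> \<bullet> V)) (at t)"
    by (intro DERIV_cmult) (simp add: has_real_derivative_iff_has_vector_derivative)
  show ?thesis
  proof (cases "snd q")
    case True
    show ?thesis using DERIV_fun_sin[OF h] True
      by (simp add: ft_def fd_inner \<kappa>_def[symmetric] mult_ac)
  next
    case False
    show ?thesis using DERIV_fun_cos[OF h] False
      by (simp add: ft_def fd_inner \<kappa>_def[symmetric] mult_ac)
  qed
qed

lemma torus_main:
  fixes X :: "real^'n \<Rightarrow> real^'n"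
  assumes "torus_polynomic_le m X"
  defines "D \<equiv> card ((TK (max m 1) \<times> (UNIV::bool set)) \<times> (UNIV::bool set) :: (((int^'n) \<times> bool) \<times> bool) set)"
  shows "\<exists>(\<Psi> :: nat \<Rightarrow> real^'n \<Rightarrow> real) B. torus_smooth_embedding D \<Psi> \<and>
     (\<forall>i<D. \<forall>j<D. \<forall>k<D. B i j k = - B k j i) \<and>
     (\<forall>\<gamma> :: real \<Rightarrow> real^'n. (\<forall>t. (\<gamma> has_vector_derivative X (\<gamma> t)) (at t)) \<longrightarrow>
        (\<forall>t. \<forall>i<D. ((\<lambda>s. \<Psi> i (\<gamma> s)) has_real_derivative quad_field D B (\<lambda>j. \<Psi> j (\<gamma> t)) i) (at t))) \<and>
     quad_div_free D B"
proof -
  obtain aa bb :: "int^'n \<Rightarrow> real^'n" where X: "X = (\<lambda>x. \<Sum>k\<in>{k. sqmod k \<le> int m}.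
                  sin (2 * pi * freq_dot k x) *\<^sub>R aa k + cos (2 * pi * freq_dot k x) *\<^sub>R bb k)"
    using assms(1) unfolding torus_polynomic_le_def by blast
  define M where "M = max m 1"
  define I where "I = (TK M \<times> (UNIV::bool set) :: ((int^'n) \<times> bool) set)"
  have finI: "finite I" by (simp add: I_def finite_TK)
  have sub: "TK m \<subseteq> (TK M :: (int^'n) set)" by (auto simp: TK_def M_def)
  have sI: "(\<Sum>q\<in>I. g q) = (\<Sum>l\<in>TK M. g (l,True) + g (l,False))" for g :: "(int^'n) \<times> bool \<Rightarrow> real"
    using sum.cartesian_product[where g="\<lambda>b t. g (b,t)" and A="TK M" and B=UNIV]
    by (simp add: I_def UNIV_bool add.commute)
  define lam where "lam k q = (if fst q \<in> TK m then (if snd q then freq_dot k (aa (fst q)) else freq_dot k (bb (fst q))) else 0)"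
    for k :: "int^'n" and q :: "(int^'n) \<times> bool"
  have L: "freq_dot k (X x) = (\<Sum>q\<in>I. lam k q * ft q x)" for k x
  proof -
    define G where "G l = sin (2*pi*freq_dot l x) * freq_dot k (aa l) + cos (2*pi*freq_dot l x) * freq_dot k (bb l)" for l
    have "freq_dot k (X x) = (\<Sum>l\<in>TK m. G l)"
      by (simp add: X TK_def G_def fd_inner inner_sum_right inner_add_right)
    also have "\<dots> = (\<Sum>l\<in>TK M. if l \<in> TK m then G l else 0)"
      using sum.inter_restrict[OF finite_TK, of G M "TK m"] sub by (simp add: Int_absorb1)
    also have "\<dots> = (\<Sum>q\<in>I. lam k q * ft q x)"
      unfolding sI by (intro sum.cong refl) (simp add: lam_def ft_def G_def)
    finally show ?thesis .
  qed
  define W where "W p q r = (if fst r = fst p \<and> snd r \<noteq> snd p then (if snd p then 2*pi else -2*pi) * lam (fst p) q else 0)"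
    for p q r :: "(int^'n) \<times> bool"
  have skew: "W p q r = - W r q p" for p q r
    unfolding W_def by (cases "snd p"; cases "snd r") auto
  have skew': "\<And>a b c. a\<in>I \<Longrightarrow> b\<in>I \<Longrightarrow> c\<in>I \<Longrightarrow> W a b c = - W c b a" using skew by blast
  have Dd: "D = card (I \<times> (UNIV::bool set))" unfolding D_def I_def M_def ..
  note ex = embed[where W=W and f=ft and I=I, OF finI skew', folded Dd]
  obtain \<Psi> B where P1: "\<forall>i<D. \<exists>a\<in>I. \<Psi> i = ft a \<and> (\<forall>x. quad_field D B (\<lambda>j. \<Psi> j x) i = (\<Sum>b\<in>I. \<Sum>c\<in>I. W a b c * ft b x * ft c x))"
     and P2: "\<forall>a\<in>I. \<exists>i<D. \<Psi> i = ft a"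
     and P3: "\<forall>i<D. \<forall>j<D. \<forall>k<D. B i j k = - B k j i" and P4: "quad_div_free D B"
    using ex by blast
  have sumW: "(\<Sum>b\<in>I. \<Sum>c\<in>I. W a b c * ft b x * ft c x) =
     (if snd a then 2*pi else -2*pi) * freq_dot (fst a) (X x) * ft (fst a, \<not> snd a) x" if "a \<in> I" for a x
  proof -
    define c0 where "c0 = (fst a, \<not> snd a)"
    define K where "K = (if snd a then 2*pi else -2*pi)"
    have aI: "c0 \<in> I" using that by (auto simp: I_def c0_def)
    have w: "W a b c * ft b x * ft c x = (if c = c0 then K * lam (fst a) b * ft b x * ft c0 x else 0)" for b c
      unfolding W_def c0_def K_def by (cases c) auto
    have "(\<Sum>b\<in>I. \<Sum>c\<in>I. W a b c * ft b x * ft c x) =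
       (\<Sum>b\<in>I. K * lam (fst a) b * ft b x * ft c0 x)"
      unfolding w using aI by (simp only: sum.delta[OF finI] if_True)
    also have "\<dots> = K * (\<Sum>b\<in>I. lam (fst a) b * ft b x) * ft c0 x"
      by (simp add: sum_distrib_left sum_distrib_right mult_ac)
    finally show ?thesis by (simp add: L K_def c0_def)
  qed
  have E1: "\<forall>i<D. smooth (\<Psi> i)"
  proof (intro allI impI)
    fix i assume "i < D"
    then obtain a where "\<Psi> i = ft a" using P1 by blast
    then show "smooth (\<Psi> i)" by (simp add: ft_smooth)
  qed
  have E2: "\<forall>i<D. \<forall>x k. \<Psi> i (x + (\<chi> j. of_int (k $ j))) = \<Psi> i x"
  proof (intro allI impI)
    fix i x k assume "i < D"
    then obtain a where "\<Psi> i = ft a" using P1 by blast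
    then show "\<Psi> i (x + (\<chi> j. of_int (k $ j))) = \<Psi> i x" by (simp add: ft_periodic)
  qed
  have axI: "(axis j 1, s) \<in> I" for j s by (simp add: I_def TK_def sqmod_axis M_def)
  have E3: "\<forall>x y. (\<forall>i<D. \<Psi> i x = \<Psi> i y) \<longrightarrow> (\<forall>j. x $ j - y $ j \<in> \<int>)"
  proof (intro allI impI)
    fix x y :: "real^'n" and j assume eq: "\<forall>i<D. \<Psi> i x = \<Psi> i y"
    have "ft a x = ft a y" if aI: "a \<in> I" for a
    proof -
      obtain i where i: "i < D" "\<Psi> i = ft a" using P2[rule_format, OF aI] by (elim exE conjE)
      have "\<Psi> i x = \<Psi> i y" using eq i(1) by simp
      then show ?thesis using i(2) by simp
    qed
    from this[OF axI[of j True]] this[OF axI[of j False]]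
    have "sin (2*pi*(x$j)) = sin (2*pi*(y$j)) \<and> cos (2*pi*(x$j)) = cos (2*pi*(y$j))"
      by (simp add: ft_def fd_axis)
    then obtain n :: int where "2*pi*(x$j) = 2*pi*(y$j) + 2*pi*n" using sin_cos_eq_iff by blast
    then have "2*pi*(x$j) = 2*pi*(y$j + of_int n)" by (simp add: distrib_left)
    then have "x$j = y$j + of_int n" by simp
    then have "x$j - y$j = of_int n" by simp
    then show "x $ j - y $ j \<in> \<int>" by simp
  qed
  have E4: "\<forall>x v. v \<noteq> 0 \<longrightarrow> (\<exists>i<D. deriv (\<lambda>s. \<Psi> i (x + s *\<^sub>R v)) 0 \<noteq> 0)"
  proof (intro allI impI)
    fix x v :: "real^'n" assume "v \<noteq> 0"
    have "\<exists>j. v $ j \<noteq> 0"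
    proof (rule ccontr)
      assume "\<not> (\<exists>j. v $ j \<noteq> 0)"
      then have "v = 0" by (simp add: vec_eq_iff)
      then show False using \<open>v \<noteq> 0\<close> by simp
    qed
    then obtain j where vj: "v $ j \<noteq> 0" by (elim exE)
    have h: "((\<lambda>s. 2*pi*(x$j + s * v$j)) has_real_derivative 2*pi*(v$j)) (at 0)"
      by (auto intro!: derivative_eq_intros)
    have e: "freq_dot (axis j 1) (x + s *\<^sub>R v) = x$j + s * v$j" for s by (simp add: fd_axis)
    have ds: "deriv (\<lambda>s. ft (axis j 1, True) (x + s *\<^sub>R v)) 0 = cos (2*pi*(x$j)) * (2*pi*(v$j))"
      using DERIV_fun_sin[OF h] by (intro DERIV_imp_deriv) (simp add: ft_def e)
    have dc: "deriv (\<lambda>s. ft (axis j 1, False) (x + s *\<^sub>R v)) 0 = - sin (2*pi*(x$j)) * (2*pi*(v$j))"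
      using DERIV_fun_cos[OF h] by (intro DERIV_imp_deriv) (simp add: ft_def e)
    have "deriv (\<lambda>s. ft (axis j 1, True) (x + s *\<^sub>R v)) 0 \<noteq> 0 \<or> deriv (\<lambda>s. ft (axis j 1, False) (x + s *\<^sub>R v)) 0 \<noteq> 0"
    proof (rule ccontr)
      assume "\<not> ?thesis"
      then have "cos (2*pi*(x$j)) = 0" "sin (2*pi*(x$j)) = 0" using ds dc vj by auto
      then show False using sin_cos_squared_add[of "2*pi*(x$j)"] by simp
    qed
    then obtain a where "a \<in> I" "deriv (\<lambda>s. ft a (x + s *\<^sub>R v)) 0 \<noteq> 0"
      using axI[of j True] axI[of j False] by (elim disjE) auto
    moreover obtain i where "i < D" "\<Psi> i = ft a" using P2[rule_format, OF \<open>a \<in> I\<close>] by (elim exE conjE)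
    ultimately show "\<exists>i<D. deriv (\<lambda>s. \<Psi> i (x + s *\<^sub>R v)) 0 \<noteq> 0" by auto
  qed
  have E5: "\<forall>\<gamma> :: real \<Rightarrow> real^'n. (\<forall>t. (\<gamma> has_vector_derivative X (\<gamma> t)) (at t)) \<longrightarrow>
        (\<forall>t. \<forall>i<D. ((\<lambda>s. \<Psi> i (\<gamma> s)) has_real_derivative quad_field D B (\<lambda>j. \<Psi> j (\<gamma> t)) i) (at t))"
  proof (intro allI impI)
    fix \<gamma> :: "real \<Rightarrow> real^'n" and t i
    assume g: "\<forall>t. (\<gamma> has_vector_derivative X (\<gamma> t)) (at t)" and i: "i < D"
    obtain a where a: "a \<in> I" "\<Psi> i = ft a" "\<forall>x. quad_field D B (\<lambda>j. \<Psi> j x) i = (\<Sum>b\<in>I. \<Sum>c\<in>I. W a b c * ft b x * ft c x)"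
      using P1[rule_format, OF i] by (elim bexE conjE) (intro that)
    have q: "quad_field D B (\<lambda>j. \<Psi> j (\<gamma> t)) i =
       (if snd a then 2*pi else -2*pi) * freq_dot (fst a) (X (\<gamma> t)) * ft (fst a, \<not> snd a) (\<gamma> t)"
      using a(3) sumW[OF a(1)] by metis
    show "((\<lambda>s. \<Psi> i (\<gamma> s)) has_real_derivative quad_field D B (\<lambda>j. \<Psi> j (\<gamma> t)) i) (at t)"
      unfolding q a(2) by (rule ft_deriv[OF g[rule_format, of t]])
  qed
  have "torus_smooth_embedding D \<Psi>" unfolding torus_smooth_embedding_def by (intro conjI E1 E2 E3 E4)
  then show ?thesis by (intro exI[of _ \<Psi>] exI[of _ B] conjI E5 P3 P4)
qed



inductive polyfun :: "(real^'m \<Rightarrow> real) \<Rightarrow> bool" where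
  pf_const: "polyfun (\<lambda>x. c)"
| pf_coord: "polyfun (\<lambda>x. x $ i)"
| pf_add: "polyfun f \<Longrightarrow> polyfun g \<Longrightarrow> polyfun (\<lambda>x. f x + g x)"
| pf_mult: "polyfun f \<Longrightarrow> polyfun g \<Longrightarrow> polyfun (\<lambda>x. f x * g x)"

lemma polyfun_deriv:
  "polyfun g \<Longrightarrow> \<exists>g'. (\<forall>x. (g has_derivative g' x) (at x)) \<and> (\<forall>v. polyfun (\<lambda>x. g' x v))"
proof (induction rule: polyfun.induct)
  case (pf_const c)
  show ?case by (rule exI[of _ "\<lambda>x v. 0"]) (auto intro: polyfun.pf_const)
next
  case (pf_coord i)
  show ?case
    by (rule exI[of _ "\<lambda>x v. v $ i"])
       (auto intro: polyfun.pf_const bounded_linear_imp_has_derivative[OF bounded_linear_vec_nth])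
next
  case (pf_add f g)
  then obtain f' g' where f: "\<forall>x. (f has_derivative f' x) (at x)" "\<forall>v. polyfun (\<lambda>x. f' x v)"
    and g: "\<forall>x. (g has_derivative g' x) (at x)" "\<forall>v. polyfun (\<lambda>x. g' x v)" by blast
  show ?case
    by (rule exI[of _ "\<lambda>x v. f' x v + g' x v"])
       (use f g in \<open>auto intro: polyfun.pf_add has_derivative_add\<close>)
next
  case (pf_mult f g)
  then obtain f' g' where f: "\<forall>x. (f has_derivative f' x) (at x)" "\<forall>v. polyfun (\<lambda>x. f' x v)"
    and g: "\<forall>x. (g has_derivative g' x) (at x)" "\<forall>v. polyfun (\<lambda>x. g' x v)" by blast
  have "((\<lambda>x. f x * g x) has_derivative (\<lambda>v. f x * g' x v + f' x v * g x)) (at x)" for x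
    using has_derivative_mult[OF f(1)[rule_format, of x] g(1)[rule_format, of x]] by simp
  moreover have "polyfun (\<lambda>x. f x * g' x v + f' x v * g x)" for v
    using pf_mult.hyps f(2) g(2) by (intro polyfun.pf_add polyfun.pf_mult) auto
  ultimately show ?case
    by (intro exI[of _ "\<lambda>x v. f x * g' x v + f' x v * g x"]) auto
qed

lemma polyfun_smooth: "polyfun g \<Longrightarrow> smooth g"
  using smooth_classI[of "Collect polyfun" g] polyfun_deriv by auto

definition wrd :: "'m list \<Rightarrow> real^'m \<Rightarrow> real" where
  "wrd w x = prod_list (map (\<lambda>i. x $ i) w)"

lemma wrd_Nil[simp]: "wrd [] x = 1" and wrd_Cons[simp]: "wrd (a # w) x = x $ a * wrd w x"
  by (simp_all add: wrd_def)

lemma wrd_append: "wrd (u @ w) x = wrd u x * wrd w x" by (simp add: wrd_def)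

lemma wrd_polyfun: "polyfun (wrd w)"
proof (induction w)
  case Nil
  then show ?case using polyfun.pf_const[of 1] by (simp add: wrd_def[abs_def])
next
  case (Cons a w)
  have "polyfun (\<lambda>x. x $ a * wrd w x)" by (intro polyfun.pf_mult polyfun.pf_coord Cons)
  then show ?case by (simp add: wrd_def[abs_def])
qed

definition SL :: "nat \<Rightarrow> ('m::finite) list set" where "SL L = {w. length w = L}"

lemma finite_SL: "finite (SL L :: ('m::finite) list set)"
  using finite_lists_length_eq[of "UNIV::'m set" L] by (simp add: SL_def)

lemma SL_0: "SL 0 = {[]}" by (auto simp: SL_def)

lemma sum_SL_Suc: "(\<Sum>v\<in>SL (Suc L). g v) = (\<Sum>b\<in>UNIV. \<Sum>w\<in>SL L. g (b # w))"
proof -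
  have im: "SL (Suc L) = (\<lambda>(b,w). b # w) ` (UNIV \<times> SL L)"
    by (auto simp: SL_def length_Suc_conv image_iff)
  have inj: "inj_on (\<lambda>(b,w). b # w) (UNIV \<times> SL L)" by (auto simp: inj_on_def)
  have "(\<Sum>v\<in>SL (Suc L). g v) = (\<Sum>p\<in>UNIV \<times> SL L. g (fst p # snd p))"
    unfolding im by (subst sum.reindex[OF inj]) (simp add: case_prod_beta)
  also have "\<dots> = (\<Sum>b\<in>UNIV. \<Sum>w\<in>SL L. g (b # w))"
    using sum.cartesian_product[where g="\<lambda>b w. g (b # w)" and A=UNIV and B="SL L"]
    by (simp add: case_prod_beta)
  finally show ?thesis .
qed

lemma sum_if_const: "(\<Sum>b\<in>I. (if P then f b else 0)) = (if P then (\<Sum>b\<in>I. f b) else (0::real))"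
  by (cases P) simp_all

fun Mw :: "('m \<Rightarrow> 'm \<Rightarrow> real) \<Rightarrow> 'm list \<Rightarrow> 'm list \<Rightarrow> real" where
  "Mw Om (a # w) (b # v) = (if w = v then Om a b else 0) + (if a = b then Mw Om w v else 0)"
| "Mw Om _ _ = 0"

lemma Mw_skew:
  assumes "\<And>i j. Om j i = - Om i j"
  shows "Mw Om v w = - Mw Om w v"
proof (induction w arbitrary: v)
  case Nil
  then show ?case by (cases v) auto
next
  case (Cons a w)
  then show ?case
  proof (cases v)
    case (Cons b v')
    then show ?thesis using Cons.IH[of v'] assms[of a b] by auto
  qed simp
qed

lemma Mw_len: "length w \<noteq> length v \<Longrightarrow> Mw Om w v = 0"
proof (induction w arbitrary: v)
  case (Cons a w)
  then show ?case by (cases v) auto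
qed simp

lemma Mw_lin:
  "Mw (\<lambda>i j. \<Sum>b\<in>I. om i b j * g b) w v = (\<Sum>b\<in>I. Mw (\<lambda>i j. om i b j) w v * g b)"
proof (induction w arbitrary: v)
  case Nil
  then show ?case by simp
next
  case (Cons a w)
  then show ?case
  proof (cases v)
    case (Cons c v')
    show ?thesis using Cons.IH[of v']
      by (cases "w = v'"; cases "a = c") (simp_all add: Cons sum.distrib distrib_right)
  qed simp
qed

lemma wrd_deriv:
  fixes \<gamma> :: "real \<Rightarrow> real^'m"
  assumes d: "\<And>i. ((\<lambda>s. \<gamma> s $ i) has_real_derivative (\<Sum>j\<in>UNIV. Om i j * \<gamma> t $ j)) (at t)"
  shows "((\<lambda>s. wrd w (\<gamma> s)) has_real_derivative (\<Sum>v\<in>SL (length w). Mw Om w v * wrd v (\<gamma> t))) (at t)"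
proof (induction w)
  case Nil
  then show ?case by (simp add: SL_0)
next
  case (Cons a w)
  define x where "x = \<gamma> t"
  define L where "L = length w"
  have wS: "w \<in> SL L" by (simp add: SL_def L_def)
  have "(\<Sum>v\<in>SL (length (a # w)). Mw Om (a # w) v * wrd v x)
      = (\<Sum>b\<in>UNIV. \<Sum>v\<in>SL L. Mw Om (a # w) (b # v) * wrd (b # v) x)"
    by (simp add: sum_SL_Suc L_def)
  also have "\<dots> = (\<Sum>b\<in>UNIV. \<Sum>v\<in>SL L. (if v = w then Om a b * (x $ b * wrd w x) else 0)
                  + (if b = a then Mw Om w v * (x $ a * wrd v x) else 0))"
    by (intro sum.cong refl) (auto simp: distrib_right)
  also have "\<dots> = (\<Sum>b\<in>UNIV. Om a b * (x $ b * wrd w x)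
                  + (if b = a then (\<Sum>v\<in>SL L. Mw Om w v * (x $ a * wrd v x)) else 0))"
    using wS by (simp add: sum.distrib finite_SL sum.delta sum_if_const)
  also have "\<dots> = (\<Sum>j\<in>UNIV. Om a j * x $ j) * wrd w x + (\<Sum>v\<in>SL L. Mw Om w v * wrd v x) * x $ a"
    by (simp add: sum.distrib sum_distrib_left sum_distrib_right mult_ac)
  finally have eq: "(\<Sum>v\<in>SL (length (a # w)). Mw Om (a # w) v * wrd v x) =
      (\<Sum>j\<in>UNIV. Om a j * x $ j) * wrd w x + (\<Sum>v\<in>SL L. Mw Om w v * wrd v x) * x $ a" .
  have "((\<lambda>s. \<gamma> s $ a * wrd w (\<gamma> s)) has_real_derivative
      (\<Sum>j\<in>UNIV. Om a j * x $ j) * wrd w x + (\<Sum>v\<in>SL L. Mw Om w v * wrd v x) * x $ a) (at t)"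
    using DERIV_mult[OF d[of a] Cons.IH] unfolding x_def L_def .
  then have "((\<lambda>s. wrd (a # w) (\<gamma> s)) has_real_derivative
      (\<Sum>v\<in>SL (length (a # w)). Mw Om (a # w) v * wrd v x)) (at t)" unfolding eq by simp
  then show ?case by (simp only: x_def)
qed

definition IW :: "nat \<Rightarrow> ('m::finite) list set" where "IW m = {w. 1 \<le> length w \<and> length w \<le> Suc m}"

lemma finite_IW: "finite (IW m :: ('m::finite) list set)"
proof -
  have "IW m \<subseteq> {xs. set xs \<subseteq> (UNIV::'m set) \<and> length xs \<le> Suc m}" by (auto simp: IW_def)
  then show ?thesis by (rule finite_subset) (use finite_lists_length_le[of "UNIV::'m set" "Suc m"] in simp)
qed

lemma finite_A: "finite {\<alpha> :: ('m::finite) \<Rightarrow> nat. (\<Sum>i\<in>UNIV. \<alpha> i) \<le> m}"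
proof -
  have "{\<alpha> :: 'm \<Rightarrow> nat. (\<Sum>i\<in>UNIV. \<alpha> i) \<le> m} \<subseteq> PiE UNIV (\<lambda>_. {..m})"
  proof
    fix \<alpha> :: "'m \<Rightarrow> nat" assume "\<alpha> \<in> {\<alpha>. (\<Sum>i\<in>UNIV. \<alpha> i) \<le> m}"
    then have "\<alpha> i \<le> m" for i using member_le_sum[of i UNIV \<alpha>] by simp
    then show "\<alpha> \<in> PiE UNIV (\<lambda>_. {..m})" by (simp add: PiE_UNIV_domain)
  qed
  moreover have "finite (PiE (UNIV::'m set) (\<lambda>_. {..m}))" by (intro finite_PiE) auto
  ultimately show ?thesis by (rule finite_subset)
qed

lemma wrd_concat: "wrd (concat ws) x = prod_list (map (\<lambda>w. wrd w x) ws)"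
  by (induction ws) (simp_all add: wrd_append)

lemma wrd_replicate: "wrd (replicate n i) x = x $ i ^ n"
  by (simp add: wrd_def)

lemma sphere_main:
  fixes X :: "real^'m \<Rightarrow> real^'m"
  assumes "sphere_polynomic_le m X"
  defines "D \<equiv> card (IW m \<times> (UNIV::bool set) :: ('m list \<times> bool) set)"
  shows "\<exists>(\<Psi> :: nat \<Rightarrow> real^'m \<Rightarrow> real) B. sphere_smooth_embedding D \<Psi> \<and>
     (\<forall>i<D. \<forall>j<D. \<forall>k<D. B i j k = - B k j i) \<and>
     (\<forall>\<gamma> :: real \<Rightarrow> real^'m. (\<forall>t. \<gamma> t \<in> sphere 0 1) \<and>
          (\<forall>t. (\<gamma> has_vector_derivative X (\<gamma> t)) (at t)) \<longrightarrow>
        (\<forall>t. \<forall>i<D. ((\<lambda>s. \<Psi> i (\<gamma> s)) has_real_derivative quad_field D B (\<lambda>j. \<Psi> j (\<gamma> t)) i) (at t))) \<and>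
     quad_div_free D B"
proof -
  obtain P :: "real^'m \<Rightarrow> real^'m" where Pp: "\<forall>i. poly_fun_le m (\<lambda>x. P x $ i)"
    and Pt: "\<forall>x\<in>sphere 0 1. P x \<bullet> x = 0" and XP: "\<forall>x\<in>sphere 0 1. X x = P x"
    using assms(1) unfolding sphere_polynomic_le_def by (elim exE conjE)
  define A where "A = {\<alpha> :: 'm \<Rightarrow> nat. (\<Sum>i\<in>UNIV. \<alpha> i) \<le> m}"
  have finA: "finite A" unfolding A_def by (rule finite_A)
  have "\<forall>i. \<exists>c. (\<lambda>x. P x $ i) = (\<lambda>x. \<Sum>\<alpha>\<in>A. c \<alpha> * monomial \<alpha> x)"
    using Pp unfolding poly_fun_le_def A_def by assumption
  from choice[OF this] obtain C where C: "\<forall>i. (\<lambda>x. P x $ i) = (\<lambda>x. \<Sum>\<alpha>\<in>A. C i \<alpha> * monomial \<alpha> x)"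
    by (elim exE)
  obtain L0 :: "'m list" where L0: "set L0 = UNIV" "distinct L0"
    using finite_distinct_list[of "UNIV::'m set"] by auto
  define wd where "wd \<alpha> = concat (map (\<lambda>i. replicate (\<alpha> i) i) L0)" for \<alpha> :: "'m \<Rightarrow> nat"
  have wd_wrd: "wrd (wd \<alpha>) x = monomial \<alpha> x" for \<alpha> x
  proof -
    have "wrd (wd \<alpha>) x = prod_list (map (\<lambda>i. x $ i ^ \<alpha> i) L0)"
      by (simp add: wd_def wrd_concat wrd_replicate o_def)
    also have "\<dots> = (\<Prod>i\<in>set L0. x $ i ^ \<alpha> i)" by (rule prod.distinct_set_conv_list[symmetric, OF L0(2)])
    finally show ?thesis by (simp add: monomial_def L0(1))
  qed
  have wd_len: "length (wd \<alpha>) = (\<Sum>i\<in>UNIV. \<alpha> i)" for \<alpha>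
  proof -
    have "length (wd \<alpha>) = sum_list (map \<alpha> L0)"
      by (simp add: wd_def length_concat o_def)
    also have "\<dots> = (\<Sum>i\<in>set L0. \<alpha> i)" by (rule sum.distinct_set_conv_list[symmetric, OF L0(2)])
    finally show ?thesis by (simp add: L0(1))
  qed
  define I where "I = (IW m :: 'm list set)"
  have finI: "finite I" unfolding I_def by (rule finite_IW)
  have wdI: "j # wd \<alpha> \<in> I" if "\<alpha> \<in> A" for j \<alpha>
    using that by (simp add: I_def IW_def A_def wd_len)
  define \<rho> where "\<rho> i b j = (\<Sum>\<alpha>\<in>{\<alpha>. \<alpha> \<in> A \<and> j # wd \<alpha> = b}. C i \<alpha>)" for i b j
  have Pj: "P x $ i * x $ j = (\<Sum>b\<in>I. \<rho> i b j * wrd b x)" for x i j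
  proof -
    have "P x $ i * x $ j = (\<Sum>\<alpha>\<in>A. C i \<alpha> * wrd (j # wd \<alpha>) x)"
      using fun_cong[OF spec[OF C, of i], of x]
      by (simp add: sum_distrib_left sum_distrib_right wd_wrd mult_ac)
    also have "\<dots> = (\<Sum>b\<in>I. \<Sum>\<alpha>\<in>{\<alpha>. \<alpha> \<in> A \<and> j # wd \<alpha> = b}. C i \<alpha> * wrd (j # wd \<alpha>) x)"
      by (rule sum.group[symmetric, OF finA finI]) (use wdI in auto)
    also have "\<dots> = (\<Sum>b\<in>I. \<rho> i b j * wrd b x)"
      unfolding \<rho>_def sum_distrib_right by (intro sum.cong refl) auto
    finally show ?thesis .
  qed
  define \<omega> where "\<omega> i b j = \<rho> i b j - \<rho> j b i" for i b j
  define \<Omega> where "\<Omega> x i j = P x $ i * x $ j - P x $ j * x $ i" for x :: "real^'m" and i j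
  have \<Omega>lin: "\<Omega> x = (\<lambda>i j. \<Sum>b\<in>I. \<omega> i b j * wrd b x)" for x
    by (intro ext) (simp add: \<Omega>_def \<omega>_def Pj left_diff_distrib sum_subtractf)
  have \<Omega>sph: "P x $ i = (\<Sum>j\<in>UNIV. \<Omega> x i j * x $ j)" if "x \<in> sphere 0 1" for x i
  proof -
    have n: "x \<bullet> x = 1" using that by (simp add: norm_eq_1[symmetric])
    have t: "P x \<bullet> x = 0" using Pt that by blast
    have "(\<Sum>j\<in>UNIV. \<Omega> x i j * x $ j) = P x $ i * (x \<bullet> x) - x $ i * (P x \<bullet> x)"
      by (simp add: \<Omega>_def inner_vec_def left_diff_distrib right_diff_distrib sum_subtractf sum_distrib_left mult_ac)
    then show ?thesis using n t by simp
  qed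
  define W where "W a b c = Mw (\<lambda>i j. \<omega> i b j) a c" for a b c
  have skew: "\<And>a b c. a\<in>I \<Longrightarrow> b\<in>I \<Longrightarrow> c\<in>I \<Longrightarrow> W a b c = - W c b a"
    unfolding W_def by (rule Mw_skew) (simp add: \<omega>_def)
  have Dd: "D = card (I \<times> (UNIV::bool set))" unfolding D_def I_def ..
  note ex = embed[where W=W and f=wrd and I=I, OF finI skew, folded Dd]
  obtain \<Psi> B where P1: "\<forall>i<D. \<exists>a\<in>I. \<Psi> i = wrd a \<and> (\<forall>x. quad_field D B (\<lambda>j. \<Psi> j x) i = (\<Sum>b\<in>I. \<Sum>c\<in>I. W a b c * wrd b x * wrd c x))"
     and P2: "\<forall>a\<in>I. \<exists>i<D. \<Psi> i = wrd a"
     and P3: "\<forall>i<D. \<forall>j<D. \<forall>k<D. B i j k = - B k j i" and P4: "quad_div_free D B"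
    using ex by blast
  have cI: "[j] \<in> I" for j by (simp add: I_def IW_def)
  have E1: "\<forall>i<D. smooth (\<Psi> i)"
  proof (intro allI impI)
    fix i assume "i < D"
    then obtain a where "\<Psi> i = wrd a" using P1 by blast
    then show "smooth (\<Psi> i)" by (simp add: polyfun_smooth wrd_polyfun)
  qed
  have E2: "\<forall>x\<in>sphere 0 1. \<forall>y\<in>sphere 0 1. (\<forall>i<D. \<Psi> i x = \<Psi> i y) \<longrightarrow> x = y"
  proof (intro ballI impI)
    fix x y :: "real^'m" assume eq: "\<forall>i<D. \<Psi> i x = \<Psi> i y"
    have "wrd a x = wrd a y" if aI: "a \<in> I" for a
    proof -
      obtain i where i: "i < D" "\<Psi> i = wrd a" using P2[rule_format, OF aI] by (elim exE conjE)
      have "\<Psi> i x = \<Psi> i y" using eq i(1) by simp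
      then show ?thesis using i(2) by simp
    qed
    from this[OF cI] show "x = y" by (simp add: vec_eq_iff)
  qed
  have E3: "\<forall>x\<in>sphere 0 1. \<forall>v. v \<noteq> 0 \<and> v \<bullet> x = 0 \<longrightarrow>
         (\<exists>i<D. deriv (\<lambda>s. \<Psi> i (x + s *\<^sub>R v)) 0 \<noteq> 0)"
  proof (intro ballI allI impI)
    fix x v :: "real^'m" assume "v \<noteq> 0 \<and> v \<bullet> x = 0"
    then have "v \<noteq> 0" by simp
    have "\<exists>j. v $ j \<noteq> 0"
    proof (rule ccontr)
      assume "\<not> (\<exists>j. v $ j \<noteq> 0)"
      then have "v = 0" by (simp add: vec_eq_iff)
      then show False using \<open>v \<noteq> 0\<close> by simp
    qed
    then obtain j where vj: "v $ j \<noteq> 0" by (elim exE)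
    have h: "((\<lambda>s. x$j + s * v$j) has_real_derivative v$j) (at 0)"
      by (auto intro!: derivative_eq_intros)
    have "deriv (\<lambda>s. wrd [j] (x + s *\<^sub>R v)) 0 = v $ j"
      using h by (intro DERIV_imp_deriv) simp
    moreover obtain i where "i < D" "\<Psi> i = wrd [j]" using P2[rule_format, OF cI[of j]] by (elim exE conjE)
    ultimately show "\<exists>i<D. deriv (\<lambda>s. \<Psi> i (x + s *\<^sub>R v)) 0 \<noteq> 0" using vj by auto
  qed
  have E4: "\<forall>\<gamma> :: real \<Rightarrow> real^'m. (\<forall>t. \<gamma> t \<in> sphere 0 1) \<and>
          (\<forall>t. (\<gamma> has_vector_derivative X (\<gamma> t)) (at t)) \<longrightarrow>
        (\<forall>t. \<forall>i<D. ((\<lambda>s. \<Psi> i (\<gamma> s)) has_real_derivative quad_field D B (\<lambda>j. \<Psi> j (\<gamma> t)) i) (at t))"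
  proof (intro allI impI)
    fix \<gamma> :: "real \<Rightarrow> real^'m" and t i
    assume g: "(\<forall>t. \<gamma> t \<in> sphere 0 1) \<and> (\<forall>t. (\<gamma> has_vector_derivative X (\<gamma> t)) (at t))"
       and i: "i < D"
    obtain a where a: "a \<in> I" "\<Psi> i = wrd a" "\<forall>x. quad_field D B (\<lambda>j. \<Psi> j x) i = (\<Sum>b\<in>I. \<Sum>c\<in>I. W a b c * wrd b x * wrd c x)"
      using P1[rule_format, OF i] by (elim bexE conjE) (intro that)
    define x where "x = \<gamma> t"
    have xs: "x \<in> sphere 0 1" using g unfolding x_def by blast
    have "X x = P x" using XP xs by blast
    moreover have "(\<gamma> has_vector_derivative X x) (at t)" using g unfolding x_def by blast
    ultimately have gv: "(\<gamma> has_vector_derivative P x) (at t)" by simp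
    have dc: "((\<lambda>s. \<gamma> s $ k) has_real_derivative (\<Sum>j\<in>UNIV. \<Omega> x k j * \<gamma> t $ j)) (at t)" for k
    proof -
      have "((\<lambda>s. \<gamma> s $ k) has_vector_derivative P x $ k) (at t)"
        by (rule bounded_linear.has_vector_derivative[OF bounded_linear_vec_nth gv])
      then show ?thesis using \<Omega>sph[OF xs, of k] x_def by (simp add: has_real_derivative_iff_has_vector_derivative)
    qed
    note d = wrd_deriv[of \<gamma> "\<Omega> x" t, OF dc, of a]
    have SLI: "SL (length a) \<subseteq> I" using a(1) by (auto simp: SL_def I_def IW_def)
    have "(\<Sum>v\<in>SL (length a). Mw (\<Omega> x) a v * wrd v x) = (\<Sum>v\<in>I. Mw (\<Omega> x) a v * wrd v x)"
      by (rule sum.mono_neutral_left[OF finI SLI]) (auto simp: SL_def Mw_len)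
    also have "\<dots> = (\<Sum>v\<in>I. \<Sum>b\<in>I. W a b v * wrd b x * wrd v x)"
      unfolding \<Omega>lin Mw_lin W_def by (simp add: sum_distrib_left sum_distrib_right mult_ac)
    also have "\<dots> = (\<Sum>b\<in>I. \<Sum>c\<in>I. W a b c * wrd b x * wrd c x)"
      by (rule sum.swap)
    finally have "(\<Sum>v\<in>SL (length a). Mw (\<Omega> x) a v * wrd v x) = quad_field D B (\<lambda>j. \<Psi> j x) i"
      using a(3) by simp
    then show "((\<lambda>s. \<Psi> i (\<gamma> s)) has_real_derivative quad_field D B (\<lambda>j. \<Psi> j (\<gamma> t)) i) (at t)"
      using d a(2) x_def by simp
  qed
  have "sphere_smooth_embedding D \<Psi>" unfolding sphere_smooth_embedding_def by (intro conjI E1 E2 E3)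
  then show ?thesis by (intro exI[of _ \<Psi>] exI[of _ B] conjI E4 P3 P4)
qed

theorem proposition2p1:
  shows
  "(\<exists>D :: nat \<Rightarrow> nat. \<forall>m (X :: real ^ 'n \<Rightarrow> real ^ 'n). torus_polynomic_deg m X \<longrightarrow>
      (\<exists>(\<Psi> :: nat \<Rightarrow> real ^ 'n \<Rightarrow> real) (B :: nat \<Rightarrow> nat \<Rightarrow> nat \<Rightarrow> real).
         torus_smooth_embedding (D m) \<Psi> \<and>
         (\<forall>i<D m. \<forall>j<D m. \<forall>k<D m. B i j k = - B k j i) \<and>
         (\<forall>\<gamma> :: real \<Rightarrow> real ^ 'n. (\<forall>t. (\<gamma> has_vector_derivative X (\<gamma> t)) (at t)) \<longrightarrow>
            (\<forall>t. \<forall>i<D m. ((\<lambda>s. \<Psi> i (\<gamma> s)) has_real_derivative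
                 quad_field (D m) B (\<lambda>j. \<Psi> j (\<gamma> t)) i) (at t))) \<and>
         ((\<forall>x. torus_divergence X x = 0) \<longrightarrow> quad_div_free (D m) B)))
   \<and>
   (\<exists>D :: nat \<Rightarrow> nat. \<forall>m (X :: real ^ 'm \<Rightarrow> real ^ 'm). sphere_polynomic_deg m X \<longrightarrow>
      (\<exists>(\<Psi> :: nat \<Rightarrow> real ^ 'm \<Rightarrow> real) (B :: nat \<Rightarrow> nat \<Rightarrow> nat \<Rightarrow> real).
         sphere_smooth_embedding (D m) \<Psi> \<and>
         (\<forall>i<D m. \<forall>j<D m. \<forall>k<D m. B i j k = - B k j i) \<and>
         (\<forall>\<gamma> :: real \<Rightarrow> real ^ 'm. (\<forall>t. \<gamma> t \<in> sphere 0 1) \<and>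
              (\<forall>t. (\<gamma> has_vector_derivative X (\<gamma> t)) (at t)) \<longrightarrow>
            (\<forall>t. \<forall>i<D m. ((\<lambda>s. \<Psi> i (\<gamma> s)) has_real_derivative
                 quad_field (D m) B (\<lambda>j. \<Psi> j (\<gamma> t)) i) (at t))) \<and>
         ((\<forall>x\<in>sphere 0 1. sphere_divergence X x = 0) \<longrightarrow> quad_div_free (D m) B)))"
proof (rule conjI)
  show "\<exists>D :: nat \<Rightarrow> nat. \<forall>m (X :: real ^ 'n \<Rightarrow> real ^ 'n). torus_polynomic_deg m X \<longrightarrow>
      (\<exists>(\<Psi> :: nat \<Rightarrow> real ^ 'n \<Rightarrow> real) (B :: nat \<Rightarrow> nat \<Rightarrow> nat \<Rightarrow> real).
         torus_smooth_embedding (D m) \<Psi> \<and>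
         (\<forall>i<D m. \<forall>j<D m. \<forall>k<D m. B i j k = - B k j i) \<and>
         (\<forall>\<gamma> :: real \<Rightarrow> real ^ 'n. (\<forall>t. (\<gamma> has_vector_derivative X (\<gamma> t)) (at t)) \<longrightarrow>
            (\<forall>t. \<forall>i<D m. ((\<lambda>s. \<Psi> i (\<gamma> s)) has_real_derivative
                 quad_field (D m) B (\<lambda>j. \<Psi> j (\<gamma> t)) i) (at t))) \<and>
         ((\<forall>x. torus_divergence X x = 0) \<longrightarrow> quad_div_free (D m) B))"
  proof (intro exI[of _ "\<lambda>m. card ((TK (max m 1) \<times> (UNIV::bool set)) \<times> (UNIV::bool set) :: (((int^'n) \<times> bool) \<times> bool) set)"] allI impI)
    fix m and X :: "real ^ 'n \<Rightarrow> real ^ 'n"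
    assume "torus_polynomic_deg m X"
    then have "torus_polynomic_le m X" by (simp add: torus_polynomic_deg_def)
    from torus_main[OF this] show "\<exists>(\<Psi> :: nat \<Rightarrow> real ^ 'n \<Rightarrow> real) (B :: nat \<Rightarrow> nat \<Rightarrow> nat \<Rightarrow> real).
         torus_smooth_embedding (card ((TK (max m 1) \<times> (UNIV::bool set)) \<times> (UNIV::bool set) :: (((int^'n) \<times> bool) \<times> bool) set)) \<Psi> \<and>
         (\<forall>i<card ((TK (max m 1) \<times> (UNIV::bool set)) \<times> (UNIV::bool set) :: (((int^'n) \<times> bool) \<times> bool) set). \<forall>j<card ((TK (max m 1) \<times> (UNIV::bool set)) \<times> (UNIV::bool set) :: (((int^'n) \<times> bool) \<times> bool) set). \<forall>k<card ((TK (max m 1) \<times> (UNIV::bool set)) \<times> (UNIV::bool set) :: (((int^'n) \<times> bool) \<times> bool) set). B i j k = - B k j i) \<and>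
         (\<forall>\<gamma> :: real \<Rightarrow> real ^ 'n. (\<forall>t. (\<gamma> has_vector_derivative X (\<gamma> t)) (at t)) \<longrightarrow>
            (\<forall>t. \<forall>i<card ((TK (max m 1) \<times> (UNIV::bool set)) \<times> (UNIV::bool set) :: (((int^'n) \<times> bool) \<times> bool) set). ((\<lambda>s. \<Psi> i (\<gamma> s)) has_real_derivative
                 quad_field (card ((TK (max m 1) \<times> (UNIV::bool set)) \<times> (UNIV::bool set) :: (((int^'n) \<times> bool) \<times> bool) set)) B (\<lambda>j. \<Psi> j (\<gamma> t)) i) (at t))) \<and>
         ((\<forall>x. torus_divergence X x = 0) \<longrightarrow> quad_div_free (card ((TK (max m 1) \<times> (UNIV::bool set)) \<times> (UNIV::bool set) :: (((int^'n) \<times> bool) \<times> bool) set)) B)"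
      by blast
  qed
next
  show "\<exists>D :: nat \<Rightarrow> nat. \<forall>m (X :: real ^ 'm \<Rightarrow> real ^ 'm). sphere_polynomic_deg m X \<longrightarrow>
      (\<exists>(\<Psi> :: nat \<Rightarrow> real ^ 'm \<Rightarrow> real) (B :: nat \<Rightarrow> nat \<Rightarrow> nat \<Rightarrow> real).
         sphere_smooth_embedding (D m) \<Psi> \<and>
         (\<forall>i<D m. \<forall>j<D m. \<forall>k<D m. B i j k = - B k j i) \<and>
         (\<forall>\<gamma> :: real \<Rightarrow> real ^ 'm. (\<forall>t. \<gamma> t \<in> sphere 0 1) \<and>
              (\<forall>t. (\<gamma> has_vector_derivative X (\<gamma> t)) (at t)) \<longrightarrow>
            (\<forall>t. \<forall>i<D m. ((\<lambda>s. \<Psi> i (\<gamma> s)) has_real_derivative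
                 quad_field (D m) B (\<lambda>j. \<Psi> j (\<gamma> t)) i) (at t))) \<and>
         ((\<forall>x\<in>sphere 0 1. sphere_divergence X x = 0) \<longrightarrow> quad_div_free (D m) B))"
  proof (intro exI[of _ "\<lambda>m. card (IW m \<times> (UNIV::bool set) :: ('m list \<times> bool) set)"] allI impI)
    fix m and X :: "real ^ 'm \<Rightarrow> real ^ 'm"
    assume "sphere_polynomic_deg m X"
    then have "sphere_polynomic_le m X" by (simp add: sphere_polynomic_deg_def)
    note sm = sphere_main[OF this]
    show "\<exists>(\<Psi> :: nat \<Rightarrow> real ^ 'm \<Rightarrow> real) (B :: nat \<Rightarrow> nat \<Rightarrow> nat \<Rightarrow> real).
         sphere_smooth_embedding (card (IW m \<times> (UNIV::bool set) :: ('m list \<times> bool) set)) \<Psi> \<and>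
         (\<forall>i<card (IW m \<times> (UNIV::bool set) :: ('m list \<times> bool) set). \<forall>j<card (IW m \<times> (UNIV::bool set) :: ('m list \<times> bool) set). \<forall>k<card (IW m \<times> (UNIV::bool set) :: ('m list \<times> bool) set). B i j k = - B k j i) \<and>
         (\<forall>\<gamma> :: real \<Rightarrow> real ^ 'm. (\<forall>t. \<gamma> t \<in> sphere 0 1) \<and>
              (\<forall>t. (\<gamma> has_vector_derivative X (\<gamma> t)) (at t)) \<longrightarrow>
            (\<forall>t. \<forall>i<card (IW m \<times> (UNIV::bool set) :: ('m list \<times> bool) set). ((\<lambda>s. \<Psi> i (\<gamma> s)) has_real_derivative
                 quad_field (card (IW m \<times> (UNIV::bool set) :: ('m list \<times> bool) set)) B (\<lambda>j. \<Psi> j (\<gamma> t)) i) (at t))) \<and>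
         ((\<forall>x\<in>sphere 0 1. sphere_divergence X x = 0) \<longrightarrow> quad_div_free (card (IW m \<times> (UNIV::bool set) :: ('m list \<times> bool) set)) B)"
      using sm by blast
  qed
qed

end
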